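(* Let $w\in\mathcal{W}$ with $\lambda_{\min}(\Sigma_w)=\Lambda_w>0$, and let $\hat w$ be a function on $\mathcal{X}$ with $\mathbb{E}[(w(\boldsymbol{X})-\hat w(\boldsymbol{X}))^2]=\epsilon^2<\Lambda_w^2/\mathbb{E}[\|\boldsymbol{X}\|_2^4]$. Then $$\|\boldsymbol{\beta}_{\hat w}-\boldsymbol{\beta}_w\|_2\le\frac{\epsilon\|\Sigma_w\|_2\|\boldsymbol{\beta}_w\|_2}{\Lambda_w-\epsilon\sqrt{\mathbb{E}[\|\boldsymbol{X}\|_2^4]}}\left(\frac{\sqrt{\mathbb{E}[\|\boldsymbol{X}\|_2^4]}}{\|\Sigma_w\|_2}+\frac{\sqrt{\mathbb{E}[\|\boldsymbol{X}Y\|_2^2]}}{\|\mathbb{E}[w(\boldsymbol{X})\boldsymbol{X}Y]\|_2}\right).$$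
   Context: $\boldsymbol{X}\in\mathbb{R}^d$ features and $Y\in\mathbb{R}$ outcome with training distribution $P^{\text{tr}}$; $\mathcal{X}$ is the support of $\boldsymbol{X}$, $\mathbb{E}$ expectation under $P^{\text{tr}}$. $\mathcal{W}=\{w:\mathcal{X}\to\mathbb{R}^+\mid\mathbb{E}[w(\boldsymbol{X})]=1\}$. For a function $u$ on $\mathcal{X}$, $\Sigma_u=\mathbb{E}[u(\boldsymbol{X})\boldsymbol{X}\boldsymbol{X}^T]$ and $\boldsymbol{\beta}_u=\Sigma_u^{-1}\mathbb{E}[u(\boldsymbol{X})\boldsymbol{X}Y]$. $\lambda_{\min}$ is the smallest eigenvalue, $\|\cdot\|_2$ the spectral norm on matrices. *)

theory Defs
  imports "HOL-Probability.Probability"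
begin

definition mat_eigenvalues :: "real^'n^'n \<Rightarrow> real set" where
  "mat_eigenvalues A = {l. \<exists>v. v \<noteq> 0 \<and> A *v v = l *\<^sub>R v}"

definition lambda_min :: "real^'n^'n \<Rightarrow> real" where
  "lambda_min A = Inf (mat_eigenvalues A)"

definition spec_norm :: "real^'n^'m \<Rightarrow> real" where
  "spec_norm A = onorm (\<lambda>x. A *v x)"

definition outer :: "real^'n \<Rightarrow> real^'n^'n" where
  "outer x = (\<chi> i j. x $ i * x $ j)"

definition Sigma_u :: "'s measure \<Rightarrow> ('s \<Rightarrow> real^'n) \<Rightarrow> (real^'n \<Rightarrow> real) \<Rightarrow> real^'n^'n" where
  "Sigma_u M X u = (\<integral>\<omega>. u (X \<omega>) *\<^sub>R outer (X \<omega>) \<partial>M)"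

definition cross_u :: "'s measure \<Rightarrow> ('s \<Rightarrow> real^'n) \<Rightarrow> ('s \<Rightarrow> real) \<Rightarrow> (real^'n \<Rightarrow> real) \<Rightarrow> real^'n" where
  "cross_u M X Y u = (\<integral>\<omega>. (u (X \<omega>) * Y \<omega>) *\<^sub>R X \<omega> \<partial>M)"

definition beta_u :: "'s measure \<Rightarrow> ('s \<Rightarrow> real^'n) \<Rightarrow> ('s \<Rightarrow> real) \<Rightarrow> (real^'n \<Rightarrow> real) \<Rightarrow> real^'n" where
  "beta_u M X Y u = matrix_inv (Sigma_u M X u) *v cross_u M X Y u"

end

theory Submission imports Defs begin

lemma outer_mult: "outer x *v v = (x \<bullet> v) *\<^sub>R x"
  by (simp add: vec_eq_iff outer_def matrix_vector_mult_def inner_vec_def sum_distrib_left algebra_simps)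

lemma norm_outer: "norm (outer x) = norm x ^ 2"
proof -
  have "inner (outer x) (outer x) = (x \<bullet> x)^2"
    by (simp add: outer_def inner_vec_def power2_eq_square sum_product algebra_simps)
  then show ?thesis
    by (simp add: norm_eq_sqrt_inner power2_norm_eq_inner)
qed

lemma outer_cont: "continuous_on UNIV outer"
  unfolding outer_def by (intro continuous_intros)

lemma linear_mv: "linear (\<lambda>A::real^'n^'m. A *v x)"
  by (auto simp: linear_iff matrix_vector_mult_def vec_eq_iff sum.distrib sum_distrib_left algebra_simps)

lemma inv_apply:
  fixes A :: "real^'n^'n"
  assumes "inj ((*v) A)"
  shows "A *v (matrix_inv A *v c) = c"
proof -
  have "invertible A" using assms invertible_left_inverse matrix_left_invertible_injective by blast
  then have "A ** matrix_inv A = mat 1 \<and> matrix_inv A ** A = mat 1"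
    unfolding invertible_def matrix_inv_def by (rule someI_ex)
  then show ?thesis by (metis matrix_vector_mul_assoc matrix_vector_mul_lid)
qed

lemma sym_inner:
  fixes A :: "real^'n^'n"
  assumes "\<And>i j. A $ i $ j = A $ j $ i"
  shows "y \<bullet> (A *v x) = x \<bullet> (A *v y)"
  apply (simp add: inner_vec_def matrix_vector_mult_def sum_distrib_left)
  apply (subst sum.swap)
  apply (simp add: assms algebra_simps)
  done

lemma psd_zero:
  fixes B :: "real^'n^'n"
  assumes sym: "\<And>i j. B $ i $ j = B $ j $ i"
    and psd: "\<And>y. y \<bullet> (B *v y) \<ge> 0" and z: "x \<bullet> (B *v x) = 0"
  shows "B *v x = 0"
proof (rule ccontr)
  assume ne: "B *v x \<noteq> 0"
  define z where "z = B *v x"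
  define a where "a = z \<bullet> z"
  define b where "b = z \<bullet> (B *v z)"
  have a: "a > 0" using ne unfolding a_def z_def by simp
  have b: "b \<ge> 0" unfolding b_def using psd by simp
  define s where "s = a / (b + 1)"
  have s: "s > 0" using a b unfolding s_def by simp
  have "0 \<le> (x - s *\<^sub>R z) \<bullet> (B *v (x - s *\<^sub>R z))" by (rule psd)
  also have "\<dots> = x \<bullet> (B *v x) - 2 * s * a + s^2 * b"
    using sym_inner[of B z x, OF sym]
    by (simp add: matrix_vector_mult_diff_distrib inner_diff_left inner_diff_right
        matrix_vector_mult_scaleR a_def b_def z_def power2_eq_square algebra_simps)
  finally have "2 * s * a \<le> s^2 * b" using z by simp
  then have "2 * a \<le> s * b" using s by (simp add: power2_eq_square)
  moreover have "s * b < a" using a b unfolding s_def by (simp add: field_simps)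
  ultimately show False using a by simp
qed


lemma lam_min_quad:
  fixes A :: "real^'n^'n"
  assumes sym: "\<And>i j. A $ i $ j = A $ j $ i"
  shows "lambda_min A * (x \<bullet> x) \<le> x \<bullet> (A *v x)"
proof -
  let ?q = "\<lambda>x. x \<bullet> (A *v x)"
  obtain u :: "real^'n" where u: "norm u = 1" using vector_choose_size[of 1] by auto
  have cq: "continuous_on (sphere 0 1) ?q"
    by (intro continuous_intros linear_continuous_on bounded_linear_intros)
  obtain x0 where x0: "x0 \<in> sphere 0 1" and mn: "\<And>y. y \<in> sphere 0 1 \<Longrightarrow> ?q x0 \<le> ?q y"
    using continuous_attains_inf[OF compact_sphere _ cq] u by fastforce
  define m where "m = ?q x0"
  have qge: "m * (y \<bullet> y) \<le> ?q y" for y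
  proof (cases "y = 0")
    case True then show ?thesis by simp
  next
    case False
    define n where "n = norm y"
    have n: "n > 0" using False n_def by simp
    have "(inverse n *\<^sub>R y) \<in> sphere 0 1" using n n_def by simp
    from mn[OF this] have "m \<le> inverse n ^ 2 * ?q y"
      by (simp add: m_def matrix_vector_mult_scaleR power2_eq_square)
    then have "m * n^2 \<le> ?q y" using n by (simp add: field_simps)
    then show ?thesis by (simp add: n_def power2_norm_eq_inner)
  qed
  define B where "B = A - m *\<^sub>R mat 1"
  have Bv: "B *v y = A *v y - m *\<^sub>R y" for y
  proof -
    have "(m *\<^sub>R mat 1) *v y = m *\<^sub>R y"
    proof -
      have "(\<Sum>j\<in>UNIV. m * (if i = j then 1 else 0) * y $ j) = m * y $ i" for i
      proof -
        have "(\<Sum>j\<in>UNIV. m * (if i = j then 1 else 0) * y $ j) = (\<Sum>j\<in>UNIV. if i = j then m * y $ j else 0)"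
          by (rule sum.cong) auto
        then show ?thesis by simp
      qed
      then show ?thesis by (simp add: vec_eq_iff matrix_vector_mult_def mat_def)
    qed
    then show ?thesis by (simp add: B_def matrix_vector_mult_diff_rdistrib)
  qed
  have "B *v x0 = 0"
  proof (rule psd_zero)
    show "B $ i $ j = B $ j $ i" for i j by (simp add: B_def sym mat_def)
    show "0 \<le> y \<bullet> (B *v y)" for y using qge[of y] by (simp add: Bv inner_diff_right algebra_simps)
    show "x0 \<bullet> (B *v x0) = 0" using x0 by (simp add: Bv inner_diff_right m_def power2_norm_eq_inner[symmetric])
  qed
  then have ev: "A *v x0 = m *\<^sub>R x0" by (simp add: Bv)
  have x0ne: "x0 \<noteq> 0" using x0 by auto
  have mem: "m \<in> mat_eigenvalues A" unfolding mat_eigenvalues_def using ev x0ne by blast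
  have bdd: "bdd_below (mat_eigenvalues A)"
  proof (rule bdd_belowI)
    fix l assume "l \<in> mat_eigenvalues A"
    then obtain v where v: "v \<noteq> 0" "A *v v = l *\<^sub>R v" unfolding mat_eigenvalues_def by blast
    have "m * (v \<bullet> v) \<le> l * (v \<bullet> v)" using qge[of v] v by simp
    moreover have "v \<bullet> v > 0" using v by simp
    ultimately show "m \<le> l" by simp
  qed
  have "lambda_min A \<le> m" unfolding lambda_min_def by (rule cInf_lower[OF mem bdd])
  then have "lambda_min A * (x \<bullet> x) \<le> m * (x \<bullet> x)" by (simp add: mult_right_mono)
  also have "\<dots> \<le> ?q x" by (rule qge)
  finally show ?thesis .
qed

lemma lam_min_norm:
  fixes A :: "real^'n^'n"
  assumes sym: "\<And>i j. A $ i $ j = A $ j $ i" and pos: "lambda_min A \<ge> 0"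
  shows "lambda_min A * norm x \<le> norm (A *v x)"
proof (cases "x = 0")
  case True then show ?thesis by simp
next
  case False
  have "lambda_min A * norm x * norm x \<le> norm x * norm (A *v x)"
    using lam_min_quad[OF sym, of x] norm_cauchy_schwarz[of x "A *v x"]
    by (simp add: power2_norm_eq_inner[symmetric] power2_eq_square mult.assoc)
  then show ?thesis using False by (simp add: mult.commute)
qed

lemma cs_int:
  fixes f g :: "'a \<Rightarrow> real"
  assumes [measurable]: "f \<in> borel_measurable M" "g \<in> borel_measurable M"
    and i1: "integrable M (\<lambda>x. f x ^ 2)" and i2: "integrable M (\<lambda>x. g x ^ 2)"
  shows "integrable M (\<lambda>x. \<bar>f x\<bar> * \<bar>g x\<bar>)"
    and "(\<integral>x. \<bar>f x\<bar> * \<bar>g x\<bar> \<partial>M) \<le> sqrt (\<integral>x. f x ^ 2 \<partial>M) * sqrt (\<integral>x. g x ^ 2 \<partial>M)"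
proof -
  have ifg: "integrable M (\<lambda>x. \<bar>f x\<bar> * \<bar>g x\<bar>)"
  proof (rule Bochner_Integration.integrable_bound[OF Bochner_Integration.integrable_add[OF i1 i2]])
    show "AE x in M. norm (\<bar>f x\<bar> * \<bar>g x\<bar>) \<le> norm (f x ^ 2 + g x ^ 2)"
    proof (intro AE_I2)
      fix x
      have "2 * (\<bar>f x\<bar> * \<bar>g x\<bar>) \<le> f x ^ 2 + g x ^ 2"
        using sum_squares_bound[of "\<bar>f x\<bar>" "\<bar>g x\<bar>"] by (simp add: power2_abs)
      moreover have "0 \<le> \<bar>f x\<bar> * \<bar>g x\<bar>" by simp
      moreover have "norm (\<bar>f x\<bar> * \<bar>g x\<bar>) = \<bar>f x\<bar> * \<bar>g x\<bar>" by simp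
      moreover have "norm (f x ^ 2 + g x ^ 2) = f x ^ 2 + g x ^ 2" by simp
      ultimately show "norm (\<bar>f x\<bar> * \<bar>g x\<bar>) \<le> norm (f x ^ 2 + g x ^ 2)"
        by linarith
    qed
  qed measurable
  then show "integrable M (\<lambda>x. \<bar>f x\<bar> * \<bar>g x\<bar>)" .
  define a where "a = (\<integral>x. f x ^ 2 \<partial>M)"
  define b where "b = (\<integral>x. g x ^ 2 \<partial>M)"
  define c where "c = (\<integral>x. \<bar>f x\<bar> * \<bar>g x\<bar> \<partial>M)"
  have a0: "a \<ge> 0" unfolding a_def by simp
  have b0: "b \<ge> 0" unfolding b_def by simp
  have c0: "c \<ge> 0" unfolding c_def by simp
  have quad: "0 \<le> a - 2 * t * c + t^2 * b" for t
  proof -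
    have "0 \<le> (\<integral>x. (\<bar>f x\<bar> - t * \<bar>g x\<bar>)^2 \<partial>M)" by simp
    also have "\<dots> = (\<integral>x. f x ^ 2 - 2 * t * (\<bar>f x\<bar> * \<bar>g x\<bar>) + t^2 * g x ^ 2 \<partial>M)"
      by (rule Bochner_Integration.integral_cong) (auto simp: power2_eq_square algebra_simps)
    also have "\<dots> = a - 2 * t * c + t^2 * b"
      using i1 i2 ifg by (simp add: a_def b_def c_def)
    finally show ?thesis .
  qed
  have "c^2 \<le> a * b"
  proof (cases "b = 0")
    case True
    have "c \<le> 0"
    proof (rule ccontr)
      assume "\<not> c \<le> 0"
      then have "c > 0" by simp
      with quad[of "(a + 1) / c"] True a0 have "c * 2 \<le> - (a * c)" by (simp add: field_simps)
      then show False using mult_nonneg_nonneg[of a c] a0 \<open>c > 0\<close> by linarith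
    qed
    then show ?thesis using c0 True by simp
  next
    case False
    then have bp: "b > 0" using b0 by simp
    have "0 \<le> a - 2 * (c/b) * c + (c/b)^2 * b" by (rule quad)
    then have "0 \<le> a * b - c^2" using bp by (simp add: field_simps power2_eq_square)
    then show ?thesis by simp
  qed
  then have "sqrt (c^2) \<le> sqrt (a * b)" by (rule real_sqrt_le_mono)
  then show "c \<le> sqrt a * sqrt b" using c0 by (simp add: real_sqrt_mult)
qed


lemma scaleR_mv: "(c *\<^sub>R (A::real^'n^'m)) *v x = c *\<^sub>R (A *v x)"
  by (simp add: vec_eq_iff matrix_vector_mult_def sum_distrib_left algebra_simps)

theorem proposition4:
  fixes M :: "'s measure" and X :: "'s \<Rightarrow> real^'d" and Y :: "'s \<Rightarrow> real"
    and w wh :: "real^'d \<Rightarrow> real" and eps Lam :: real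
  assumes "prob_space M"
    and "X \<in> borel_measurable M" and "Y \<in> borel_measurable M"
    and "w \<in> borel_measurable borel" and "wh \<in> borel_measurable borel"
    and "\<forall>\<omega>\<in>space M. w (X \<omega>) > 0"
    and "(\<integral>\<omega>. w (X \<omega>) \<partial>M) = 1"
    and "integrable M (\<lambda>\<omega>. w (X \<omega>) *\<^sub>R outer (X \<omega>))"
    and "integrable M (\<lambda>\<omega>. (w (X \<omega>) * Y \<omega>) *\<^sub>R X \<omega>)"
    and "integrable M (\<lambda>\<omega>. norm (X \<omega>) ^ 4)"
    and "integrable M (\<lambda>\<omega>. norm (Y \<omega> *\<^sub>R X \<omega>) ^ 2)"
    and "integrable M (\<lambda>\<omega>. (w (X \<omega>) - wh (X \<omega>)) ^ 2)"
    and "lambda_min (Sigma_u M X w) = Lam" and "Lam > 0"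
    and "eps \<ge> 0"
    and "(\<integral>\<omega>. (w (X \<omega>) - wh (X \<omega>)) ^ 2 \<partial>M) = eps ^ 2"
    and "eps ^ 2 < Lam ^ 2 / (\<integral>\<omega>. norm (X \<omega>) ^ 4 \<partial>M)"
    and "cross_u M X Y w \<noteq> 0"
  shows "norm (beta_u M X Y wh - beta_u M X Y w)
    \<le> eps * spec_norm (Sigma_u M X w) * norm (beta_u M X Y w)
        / (Lam - eps * sqrt (\<integral>\<omega>. norm (X \<omega>) ^ 4 \<partial>M))
      * (sqrt (\<integral>\<omega>. norm (X \<omega>) ^ 4 \<partial>M) / spec_norm (Sigma_u M X w)
         + sqrt (\<integral>\<omega>. norm (Y \<omega> *\<^sub>R X \<omega>) ^ 2 \<partial>M) / norm (cross_u M X Y w))"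
proof -
  note [measurable] = assms(2,3,4,5)
  have mo[measurable]: "(\<lambda>\<omega>. outer (X \<omega>)) \<in> borel_measurable M"
    by (rule borel_measurable_continuous_on[OF outer_cont]) simp
  define E4 where "E4 = (\<integral>\<omega>. norm (X \<omega>) ^ 4 \<partial>M)"
  define s where "s = sqrt E4"
  define t where "t = sqrt (\<integral>\<omega>. norm (Y \<omega> *\<^sub>R X \<omega>) ^ 2 \<partial>M)"
  define a where "a = (\<lambda>\<omega>. wh (X \<omega>) - w (X \<omega>))"
  have ma[measurable]: "a \<in> borel_measurable M" unfolding a_def by measurable
  have ia2: "integrable M (\<lambda>\<omega>. a \<omega> ^ 2)"
    using assms(12) by (simp add: a_def power2_commute)
  have Ea2: "(\<integral>\<omega>. a \<omega> ^ 2 \<partial>M) = eps ^ 2"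
    using assms(16) by (simp add: a_def power2_commute)
  have iX4: "integrable M (\<lambda>\<omega>. (norm (X \<omega>) ^ 2) ^ 2)"
    using assms(10) by (simp add: power_mult[symmetric])
  have iYX: "integrable M (\<lambda>\<omega>. (norm (Y \<omega> *\<^sub>R X \<omega>)) ^ 2)" using assms(11) .
  note cs1 = cs_int[OF ma _ ia2 iX4, simplified]
  note cs2 = cs_int[OF ma _ ia2 iYX, simplified]
  have E4pos: "E4 > 0"
  proof -
    have "E4 \<ge> 0" unfolding E4_def by simp
    moreover have "E4 \<noteq> 0" using assms(17) by (auto simp: E4_def)
    ultimately show ?thesis by simp
  qed
  have eps_s: "eps * s < Lam"
  proof -
    have "eps^2 * E4 < Lam^2" using assms(17) E4pos by (simp add: E4_def field_simps)
    then have "sqrt (eps^2 * E4) < sqrt (Lam^2)" by (rule real_sqrt_less_mono)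
    then show ?thesis using assms(14,15) by (simp add: s_def real_sqrt_mult)
  qed
  have B1: "(\<integral>\<omega>. \<bar>a \<omega>\<bar> * norm (X \<omega>) ^ 2 \<partial>M) \<le> eps * s"
    using cs1(2) Ea2 assms(15) by (simp add: s_def E4_def power_mult[symmetric])
  have B2: "(\<integral>\<omega>. \<bar>a \<omega>\<bar> * norm (Y \<omega> *\<^sub>R X \<omega>) \<partial>M) \<le> eps * t"
    using cs2(2) Ea2 assms(15) by (simp add: t_def)
  define S where "S = Sigma_u M X w"
  define c where "c = cross_u M X Y w"
  define DA where "DA = (\<integral>\<omega>. a \<omega> *\<^sub>R outer (X \<omega>) \<partial>M)"
  define dc where "dc = (\<integral>\<omega>. (a \<omega> * Y \<omega>) *\<^sub>R X \<omega> \<partial>M)"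
  have iA: "integrable M (\<lambda>\<omega>. a \<omega> *\<^sub>R outer (X \<omega>))"
    by (rule Bochner_Integration.integrable_bound[OF cs1(1)]) (auto simp: norm_outer)
  have ic: "integrable M (\<lambda>\<omega>. (a \<omega> * Y \<omega>) *\<^sub>R X \<omega>)"
    by (rule Bochner_Integration.integrable_bound[OF cs2(1)]) (auto simp: abs_mult)
  have Sh: "Sigma_u M X wh = S + DA"
  proof -
    have "Sigma_u M X wh = (\<integral>\<omega>. w (X \<omega>) *\<^sub>R outer (X \<omega>) + a \<omega> *\<^sub>R outer (X \<omega>) \<partial>M)"
      unfolding Sigma_u_def by (rule Bochner_Integration.integral_cong) (auto simp: a_def algebra_simps)
    also have "\<dots> = S + DA" unfolding S_def DA_def Sigma_u_def
      by (rule Bochner_Integration.integral_add[OF assms(8) iA])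
    finally show ?thesis .
  qed
  have ch: "cross_u M X Y wh = c + dc"
  proof -
    have "cross_u M X Y wh = (\<integral>\<omega>. (w (X \<omega>) * Y \<omega>) *\<^sub>R X \<omega> + (a \<omega> * Y \<omega>) *\<^sub>R X \<omega> \<partial>M)"
      unfolding cross_u_def by (rule Bochner_Integration.integral_cong) (auto simp: a_def algebra_simps)
    also have "\<dots> = c + dc" unfolding c_def dc_def cross_u_def
      by (rule Bochner_Integration.integral_add[OF assms(9) ic])
    finally show ?thesis .
  qed
  have DAb: "norm (DA *v x) \<le> eps * s * norm x" for x
  proof -
    have bl: "bounded_linear (\<lambda>A::real^'d^'d. A *v x)"
      using linear_mv linear_conv_bounded_linear by blast
    have "DA *v x = (\<integral>\<omega>. (a \<omega> *\<^sub>R outer (X \<omega>)) *v x \<partial>M)"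
      unfolding DA_def by (rule integral_bounded_linear[OF bl iA, symmetric])
    then have "norm (DA *v x) \<le> (\<integral>\<omega>. norm ((a \<omega> *\<^sub>R outer (X \<omega>)) *v x) \<partial>M)"
      by simp
    also have "\<dots> \<le> (\<integral>\<omega>. norm x * (\<bar>a \<omega>\<bar> * norm (X \<omega>) ^ 2) \<partial>M)"
    proof (rule integral_mono')
      show "integrable M (\<lambda>\<omega>. norm x * (\<bar>a \<omega>\<bar> * norm (X \<omega>) ^ 2))"
        using cs1(1) by simp
      fix \<omega>
      have "norm ((a \<omega> *\<^sub>R outer (X \<omega>)) *v x) = \<bar>a \<omega>\<bar> * (\<bar>X \<omega> \<bullet> x\<bar> * norm (X \<omega>))"
        by (simp add: scaleR_mv outer_mult abs_mult)
      also have "\<dots> \<le> \<bar>a \<omega>\<bar> * ((norm (X \<omega>) * norm x) * norm (X \<omega>))"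
        by (intro mult_left_mono mult_right_mono Cauchy_Schwarz_ineq2) auto
      finally show "norm ((a \<omega> *\<^sub>R outer (X \<omega>)) *v x) \<le> norm x * (\<bar>a \<omega>\<bar> * norm (X \<omega>) ^ 2)"
        by (simp add: power2_eq_square algebra_simps)
      show "0 \<le> norm x * (\<bar>a \<omega>\<bar> * norm (X \<omega>) ^ 2)" by simp
    qed
    also have "\<dots> = norm x * (\<integral>\<omega>. \<bar>a \<omega>\<bar> * norm (X \<omega>) ^ 2 \<partial>M)" by simp
    also have "\<dots> \<le> norm x * (eps * s)" by (rule mult_left_mono[OF B1]) simp
    finally show ?thesis by (simp add: algebra_simps)
  qed
  have dcb: "norm dc \<le> eps * t"
  proof -
    have "norm dc \<le> (\<integral>\<omega>. norm ((a \<omega> * Y \<omega>) *\<^sub>R X \<omega>) \<partial>M)" unfolding dc_def by (rule integral_norm_bound)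
    also have "\<dots> = (\<integral>\<omega>. \<bar>a \<omega>\<bar> * norm (Y \<omega> *\<^sub>R X \<omega>) \<partial>M)"
      by (simp add: abs_mult mult.assoc)
    finally show ?thesis using B2 by simp
  qed
  have symS: "S $ i $ j = S $ j $ i" for i j
  proof -
    have bl: "bounded_linear (\<lambda>A::real^'d^'d. A $ i $ j)" for i j
      using bounded_linear_compose[OF bounded_linear_vec_nth bounded_linear_vec_nth] by blast
    have e: "S $ i $ j = (\<integral>\<omega>. (w (X \<omega>) *\<^sub>R outer (X \<omega>)) $ i $ j \<partial>M)" for i j
      unfolding S_def Sigma_u_def by (rule integral_bounded_linear[OF bl assms(8), symmetric])
    show ?thesis unfolding e by (simp add: outer_def mult.commute)
  qed
  have Lpos: "Lam - eps * s > 0" using eps_s by simp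
  have Slow: "Lam * norm x \<le> norm (S *v x)" for x
    using lam_min_norm[OF symS] assms(13,14) by (simp add: S_def)
  have Shlow: "(Lam - eps * s) * norm x \<le> norm ((S + DA) *v x)" for x
  proof -
    have "norm ((S + DA) *v x) \<ge> norm (S *v x) - norm (DA *v x)"
      by (simp add: matrix_vector_mult_add_rdistrib norm_diff_ineq order_trans[OF _ norm_triangle_ineq4] )
    then show ?thesis using Slow[of x] DAb[of x] by (simp add: algebra_simps)
  qed
  have inj_lem: "inj ((*v) A)" if "\<And>x. L * norm x \<le> norm (A *v x)" "L > 0" for A :: "real^'d^'d" and L
  proof (rule inj_onI)
    fix x y assume "A *v x = A *v y"
    then have "A *v (x - y) = 0" by (simp add: matrix_vector_mult_diff_distrib)
    then have "L * norm (x - y) \<le> 0" using that(1)[of "x - y"] by simp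
    then show "x = y" using that(2) by (simp add: mult_le_0_iff)
  qed
  have injS: "inj ((*v) S)" using inj_lem[OF Slow assms(14)] .
  have injSh: "inj ((*v) (S + DA))" using inj_lem[OF Shlow Lpos] .
  define b where "b = beta_u M X Y w"
  define bh where "bh = beta_u M X Y wh"
  have Sb: "S *v b = c" unfolding b_def beta_u_def S_def[symmetric] c_def[symmetric]
    by (rule inv_apply[OF injS])
  have Shbh: "(S + DA) *v bh = c + dc" unfolding bh_def beta_u_def Sh ch
    by (rule inv_apply[OF injSh])
  have "(S + DA) *v (bh - b) = dc - DA *v b"
    using Sb Shbh by (simp add: matrix_vector_mult_diff_distrib matrix_vector_mult_add_rdistrib)
  then have "(Lam - eps * s) * norm (bh - b) \<le> norm (dc - DA *v b)" using Shlow[of "bh - b"] by simp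
  also have "\<dots> \<le> eps * t + eps * s * norm b"
    using norm_triangle_ineq4[of dc "DA *v b"] dcb DAb[of b] by simp
  finally have main: "norm (bh - b) \<le> (eps * t + eps * s * norm b) / (Lam - eps * s)"
    using Lpos by (simp add: field_simps)
  define N where "N = spec_norm S"
  have cN: "norm c \<le> N * norm b"
    unfolding N_def spec_norm_def Sb[symmetric]
    by (rule onorm) (simp add: matrix_vector_mul_bounded_linear)
  have cpos: "norm c > 0" using assms(18) c_def by simp
  have Npos: "N > 0"
  proof (rule ccontr)
    assume "\<not> N > 0"
    moreover have "norm b \<ge> 0" by simp
    ultimately have "N * norm b \<le> 0" by (simp add: mult_nonpos_nonneg)
    then show False using cN cpos by simp
  qed
  have t0: "t \<ge> 0" unfolding t_def by simp
  have "t \<le> N * norm b * t / norm c"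
  proof -
    have "t * norm c \<le> t * (N * norm b)" using cN t0 by (rule mult_left_mono)
    then show ?thesis using cpos by (simp add: field_simps)
  qed
  then have "eps * t \<le> eps * (N * norm b * t / norm c)"
    using assms(15) by (rule mult_left_mono)
  moreover have "eps * N * norm b * (s / N + t / norm c) = eps * s * norm b + eps * (N * norm b * t / norm c)"
    using Npos by (simp add: field_simps)
  ultimately have "eps * t + eps * s * norm b \<le> eps * N * norm b * (s / N + t / norm c)"
    by linarith
  then have "(eps * t + eps * s * norm b) / (Lam - eps * s)
      \<le> eps * N * norm b / (Lam - eps * s) * (s / N + t / norm c)"
    using Lpos by (metis divide_right_mono less_eq_real_def times_divide_eq_left)
  with main show ?thesis
    unfolding bh_def[symmetric] b_def[symmetric] S_def[symmetric] N_def[symmetric] c_def[symmetric]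
      s_def[symmetric] E4_def[symmetric] t_def[symmetric] by linarith
qed
end
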